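(* Let $k$ be a divisor of $n$ and let $X_k$ be the set of unordered partitions of $\{1,\dots,n\}$ into $k$ cells each of size $n/k$, with the natural action of $S_n$. If $\pi\in S_n$ has $c$ cycles, then the number of elements of $X_k$ fixed by $\pi$ is at most $k^c$. *)

theory Defs
  imports Main "HOL-Library.Disjoint_Sets" "HOL-Combinatorics.Permutations" "HOL-Combinatorics.Orbits"
begin

text \<open>Number of cycles of a permutation p of A (fixed points count as cycles of length 1):
  the number of distinct orbits.\<close>
definition num_cycles :: "(nat \<Rightarrow> nat) \<Rightarrow> nat set \<Rightarrow> nat" where
  "num_cycles p A = card (orbit p ` A)"

definition equipartitions :: "nat \<Rightarrow> nat \<Rightarrow> nat set set set" where
  "equipartitions n k = {P. partition_on {1..n} P \<and> card P = k \<and> (\<forall>B\<in>P. card B = n div k)}"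

definition act_partition :: "(nat \<Rightarrow> nat) \<Rightarrow> nat set set \<Rightarrow> nat set set" where
  "act_partition p P = (\<lambda>B. p ` B) ` P"

end

theory Submission
  imports Defs
begin

definition relP :: "nat set set \<Rightarrow> nat \<Rightarrow> nat \<Rightarrow> bool" where
  "relP P x y = (\<exists>B\<in>P. x \<in> B \<and> y \<in> B)"

definition Tset :: "(nat \<Rightarrow> nat) \<Rightarrow> nat set \<Rightarrow> nat \<Rightarrow> nat set" where
  "Tset p A r = {y\<in>A. Min (orbit p y) < r}"

definition Mset :: "(nat \<Rightarrow> nat) \<Rightarrow> nat set \<Rightarrow> (nat \<Rightarrow> nat \<Rightarrow> bool) \<Rightarrow> nat \<Rightarrow> nat set" where
  "Mset p A R r = {z \<in> Tset p A r. \<forall>w\<in>Tset p A r. R w z \<longrightarrow> z \<le> w}"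

definition anc :: "(nat \<Rightarrow> nat) \<Rightarrow> nat set \<Rightarrow> (nat \<Rightarrow> nat \<Rightarrow> bool) \<Rightarrow> nat \<Rightarrow> bool" where
  "anc p A R r = (\<exists>y\<in>Tset p A r. R r y)"

definition ancy :: "(nat \<Rightarrow> nat) \<Rightarrow> nat set \<Rightarrow> (nat \<Rightarrow> nat \<Rightarrow> bool) \<Rightarrow> nat \<Rightarrow> nat" where
  "ancy p A R r = (LEAST y. y \<in> Tset p A r \<and> R r y)"

definition per :: "(nat \<Rightarrow> nat) \<Rightarrow> (nat \<Rightarrow> nat \<Rightarrow> bool) \<Rightarrow> nat \<Rightarrow> nat" where
  "per p R r = (LEAST m. 0 < m \<and> R ((p^^m) r) r)"

definition code :: "(nat \<Rightarrow> nat) \<Rightarrow> nat set \<Rightarrow> (nat \<Rightarrow> nat \<Rightarrow> bool) \<Rightarrow> nat \<Rightarrow> nat" where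
  "code p A R r = (if anc p A R r then card {w \<in> Mset p A R r. w < ancy p A R r}
     else card (Mset p A R r) + per p R r - 1)"

locale eqrel =
  fixes p :: "nat \<Rightarrow> nat" and A :: "nat set" and R :: "nat \<Rightarrow> nat \<Rightarrow> bool"
  assumes perm: "p permutes A" and fin: "finite A"
    and Rdom: "R x y \<Longrightarrow> x \<in> A \<and> y \<in> A"
    and Rrefl: "x \<in> A \<Longrightarrow> R x x"
    and Rsym: "R x y \<Longrightarrow> R y x"
    and Rtrans: "R x y \<Longrightarrow> R y z \<Longrightarrow> R x z"
    and Rinv: "R (p x) (p y) \<longleftrightarrow> R x y"
begin

lemma permut: "permutation p" using perm fin permutation_permutes by blast

lemma Rpow: "R ((p^^t) x) ((p^^t) y) \<longleftrightarrow> R x y"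
proof (induction t)
  case (Suc t)
  have "R ((p^^Suc t) x) ((p^^Suc t) y) = R ((p^^t) x) ((p^^t) y)"
    using Rinv[of "(p^^t) x" "(p^^t) y"] by (simp only: funpow.simps comp_apply)
  thus ?case using Suc by simp
qed simp

lemma self_orb: "x \<in> orbit p x" by (rule permutation_self_in_orbit[OF permut])

lemma orb_eq: "y \<in> orbit p x \<Longrightarrow> orbit p y = orbit p x"
  by (meson orbit_swap orbit_trans self_orb subsetI subset_antisym)

lemma pow_orb: "(p^^t) x \<in> orbit p x"
  by (rule funpow_in_orbit[OF self_orb])

lemma orb_pow: "y \<in> orbit p x \<Longrightarrow> \<exists>t. y = (p^^t) x"
  using orbit_altdef_permutation[OF permut] by auto

lemma orb_sub: "x \<in> A \<Longrightarrow> orbit p x \<subseteq> A" by (rule permutes_orbit_subset[OF perm])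
lemma orb_fin: "finite (orbit p x)" by (rule finite_orbit[OF self_orb])

lemma pow_A: "x \<in> A \<Longrightarrow> (p^^t) x \<in> A" using orb_sub pow_orb by blast
lemma Min_pow: "Min (orbit p ((p^^t) x)) = Min (orbit p x)" by (simp add: orb_eq[OF pow_orb])

lemma T_pow: "y \<in> Tset p A r \<Longrightarrow> (p^^t) y \<in> Tset p A r"
  by (auto simp: Tset_def Min_pow pow_A)

lemma T_sub: "Tset p A r \<subseteq> A" by (auto simp: Tset_def)
lemma T_fin: "finite (Tset p A r)" using T_sub fin finite_subset by blast

lemma T_back: assumes "z \<in> Tset p A r" shows "\<exists>w\<in>Tset p A r. (p^^t) w = z"
proof -
  obtain n where n: "0 < n" "(p^^n) z = z" using permutation_self[OF permut] by blast
  have "((p^^n)^^t) z = z" by (induction t) (simp_all add: n)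
  hence e: "(p^^(n*t)) z = z" by (simp add: funpow_mult)
  have le: "t \<le> n*t" using n by simp
  let ?w = "(p^^(n*t - t)) z"
  have "(p^^t) ?w = z" using e le by (metis comp_apply funpow_add le_add_diff_inverse)
  moreover have "?w \<in> Tset p A r" using T_pow assms by blast
  ultimately show ?thesis by blast
qed

lemma per_ex: assumes "x \<in> A" shows "0 < per p R x \<and> R ((p^^per p R x) x) x"
proof -
  obtain n where n: "0 < n" "(p^^n) x = x" using permutation_self[OF permut] by blast
  hence "0 < n \<and> R ((p^^n) x) x" using Rrefl assms by simp
  thus ?thesis unfolding per_def by (rule LeastI)
qed

lemma per_dvd: assumes "x \<in> A" shows "R ((p^^d) x) x \<longleftrightarrow> per p R x dvd d"
proof
  let ?m = "per p R x"
  have pm: "0 < ?m" "R ((p^^?m) x) x" using per_ex assms by auto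
  have mq: "R ((p^^(?m*q)) x) x" for q
  proof (induction q)
    case 0 then show ?case using Rrefl assms by simp
  next
    case (Suc q)
    have "(p^^(?m*Suc q)) x = (p^^?m) ((p^^(?m*q)) x)" by (simp add: funpow_add)
    moreover have "R ((p^^?m) ((p^^(?m*q)) x)) ((p^^?m) x)" using Suc Rpow by blast
    ultimately show ?case using pm Rtrans by metis
  qed
  show "?m dvd d \<Longrightarrow> R ((p^^d) x) x" using mq by auto
  assume h: "R ((p^^d) x) x"
  let ?e = "d mod ?m" and ?q = "d div ?m"
  have "d = ?e + ?m * ?q" by simp
  hence "(p^^d) x = (p^^?e) ((p^^(?m*?q)) x)" by (metis comp_apply funpow_add)
  moreover have "R ((p^^?e) ((p^^(?m*?q)) x)) ((p^^?e) x)" using mq Rpow by blast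
  ultimately have "R ((p^^?e) x) x" using h Rsym Rtrans by metis
  moreover have lt: "?e < (LEAST m. 0 < m \<and> R ((p^^m) x) x)"
    using pm by (simp add: per_def)
  have "\<not> (0 < ?e \<and> R ((p^^?e) x) x)" by (rule not_less_Least[OF lt])
  ultimately have "?e = 0" by simp
  thus "?m dvd d" by (simp add: dvd_eq_mod_eq_0)
qed

lemma rel_pows: assumes "x \<in> A"
  shows "R ((p^^t) x) ((p^^s) x) \<longleftrightarrow> (if s \<le> t then per p R x dvd (t-s) else per p R x dvd (s-t))"
proof (cases "s \<le> t")
  case True
  hence "(p^^t) x = (p^^s) ((p^^(t-s)) x)" by (metis comp_apply funpow_add le_add_diff_inverse)
  thus ?thesis using True Rpow per_dvd assms by metis
next
  case False
  hence "(p^^s) x = (p^^t) ((p^^(s-t)) x)" by (metis comp_apply funpow_add le_add_diff_inverse nat_le_linear)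
  thus ?thesis using False Rpow per_dvd assms Rsym by metis
qed

lemma noanc: "\<not> anc p A R r \<Longrightarrow> z \<in> Tset p A r \<Longrightarrow> \<not> R ((p^^j) r) z"
  using T_back Rpow unfolding anc_def by metis

lemma M_sub: "Mset p A R r \<subseteq> Tset p A r" by (auto simp: Mset_def)
lemma M_fin: "finite (Mset p A R r)" using M_sub T_fin finite_subset by blast
lemma M_inj: "z \<in> Mset p A R r \<Longrightarrow> z' \<in> Mset p A R r \<Longrightarrow> R z z' \<Longrightarrow> z = z'"
  unfolding Mset_def using Rsym by force

lemma ancy_M: assumes "anc p A R r" shows "ancy p A R r \<in> Mset p A R r \<and> R r (ancy p A R r)"
proof -
  have y: "ancy p A R r \<in> Tset p A r \<and> R r (ancy p A R r)"
    using assms unfolding anc_def ancy_def by (metis (mono_tags, lifting) LeastI)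
  have "ancy p A R r \<le> w" if "w \<in> Tset p A r" "R w (ancy p A R r)" for w
  proof -
    have "R r w" using y that Rsym Rtrans by metis
    thus ?thesis unfolding ancy_def using that by (simp add: Least_le)
  qed
  thus ?thesis using y unfolding Mset_def by auto
qed

lemma code_lt: assumes "anc p A R r" shows "code p A R r < card (Mset p A R r)"
proof -
  let ?y = "ancy p A R r"
  have "{w \<in> Mset p A R r. w < ?y} \<subset> Mset p A R r" using ancy_M[OF assms] by auto
  thus ?thesis using assms M_fin psubset_card_mono unfolding code_def by auto
qed

lemma code_ge: assumes "r \<in> A" "\<not> anc p A R r"
  shows "code p A R r = card (Mset p A R r) + per p R r - 1 \<and> 0 < per p R r"
  using assms per_ex unfolding code_def by auto

lemma code_bound:
  assumes k: "card ((\<lambda>z. {w. R z w}) ` A) \<le> k" and r: "r \<in> A" "Min (orbit p r) = r"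
  shows "code p A R r < k"
proof -
  let ?S = "Tset p A r" and ?M = "Mset p A R r" and ?cls = "\<lambda>z. {w. R z w}"
  have clsR: "R u v" if "v \<in> A" "?cls u = ?cls v" for u v
    using that Rrefl by blast
  have Msub: "?M \<subseteq> A" using M_sub T_sub by blast
  have fc: "finite (?cls ` A)" using fin by simp
  show ?thesis
  proof (cases "anc p A R r")
    case True
    have "inj_on ?cls ?M" unfolding inj_on_def using clsR M_inj Msub by blast
    hence "card ?M \<le> card (?cls ` A)" using Msub fc by (intro card_inj_on_le) auto
    thus ?thesis using code_lt[OF True] k by linarith
  next
    case False
    let ?m = "per p R r"
    let ?O = "(\<lambda>j. (p^^j) r) ` {..<?m}"
    have pm: "0 < ?m" using per_ex r by blast
    have notS: "(p^^j) r \<notin> ?S" for j using r(2) by (simp add: Tset_def Min_pow)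
    have oeq: "i = j" if "R ((p^^i) r) ((p^^j) r)" "i < ?m" "j < ?m" for i j
      using that rel_pows[OF r(1), of i j] by (auto split: if_splits dest: dvd_imp_le)
    have injO: "inj_on (\<lambda>j. (p^^j) r) {..<?m}" unfolding inj_on_def
      using oeq Rrefl pow_A r by auto
    have disj: "?M \<inter> ?O = {}" using M_sub notS by blast
    have cardN: "card (?M \<union> ?O) = card ?M + ?m"
      using disj M_fin injO by (simp add: card_Un_disjoint card_image)
    have Osub: "?O \<subseteq> A" using pow_A r by auto
    have injN: "inj_on ?cls (?M \<union> ?O)"
    proof (rule inj_onI)
      fix u v assume u: "u \<in> ?M \<union> ?O" and v: "v \<in> ?M \<union> ?O" and e: "?cls u = ?cls v"
      have Ruv: "R u v" using clsR e v Msub Osub by blast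
      show "u = v"
      proof (cases "u \<in> ?M")
        case True
        show ?thesis
        proof (cases "v \<in> ?M")
          case True thus ?thesis using M_inj `u \<in> ?M` Ruv by blast
        next
          case False
          then obtain j where "v = (p^^j) r" using v by auto
          thus ?thesis using noanc[OF \<open>\<not> anc p A R r\<close>] Ruv Rsym M_sub True by blast
        qed
      next
        case False
        then obtain i where i: "u = (p^^i) r" "i < ?m" using u by auto
        show ?thesis
        proof (cases "v \<in> ?M")
          case True thus ?thesis using noanc[OF \<open>\<not> anc p A R r\<close>] Ruv i M_sub by blast
        next
          case False
          then obtain j where "v = (p^^j) r" "j < ?m" using v by auto
          thus ?thesis using oeq i Ruv by blast
        qed
      qed
    qed
    have "card (?M \<union> ?O) \<le> card (?cls ` A)" using injN Msub Osub fc by (intro card_inj_on_le) auto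
    thus ?thesis using cardN k pm code_ge[OF r(1) False] by linarith
  qed
qed

end

lemma rank_inj:
  fixes M :: "nat set"
  assumes "finite M" "y \<in> M" "y' \<in> M" "card {w\<in>M. w < y} = card {w\<in>M. w < y'}"
  shows "y = y'"
proof (rule ccontr)
  assume "y \<noteq> y'"
  hence "y < y' \<or> y' < y" by linarith
  thus False
  proof
    assume "y < y'"
    hence "{w\<in>M. w < y} \<subset> {w\<in>M. w < y'}" using assms by auto
    thus False using psubset_card_mono[of "{w\<in>M. w < y'}" "{w\<in>M. w < y}"] assms(1,4) by auto
  next
    assume "y' < y"
    hence "{w\<in>M. w < y'} \<subset> {w\<in>M. w < y}" using assms by auto
    thus False using psubset_card_mono[of "{w\<in>M. w < y}" "{w\<in>M. w < y'}"] assms(1,4) by auto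
  qed
qed

lemma code_step:
  assumes E: "eqrel p A R" and E': "eqrel p A R'"
    and r: "r \<in> A" and ceq: "code p A R r = code p A R' r"
    and IH: "\<forall>a\<in>Tset p A r. \<forall>b\<in>Tset p A r. R a b = R' a b"
    and a: "a \<in> Tset p A r \<union> orbit p r" and b: "b \<in> Tset p A r \<union> orbit p r"
  shows "R a b = R' a b"
proof -
  interpret E: eqrel p A R by (rule E)
  interpret E': eqrel p A R' by (rule E')
  let ?S = "Tset p A r"
  have Meq: "Mset p A R r = Mset p A R' r" unfolding Mset_def using IH by auto
  have anceq: "anc p A R r = anc p A R' r"
    using E.code_lt E'.code_lt E.code_ge[OF r] E'.code_ge[OF r] ceq Meq by fastforce
  show ?thesis
  proof (cases "anc p A R r")
    case True
    hence T': "anc p A R' r" using anceq by simp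
    have yM: "ancy p A R r \<in> Mset p A R r" "ancy p A R' r \<in> Mset p A R r"
      using E.ancy_M[OF True] E'.ancy_M[OF T'] Meq by auto
    have ce: "card {w \<in> Mset p A R r. w < ancy p A R r} = card {w \<in> Mset p A R r. w < ancy p A R' r}"
      using ceq True T' unfolding code_def Meq by simp
    have yeq: "ancy p A R r = ancy p A R' r"
      by (rule rank_inj[OF E.M_fin yM ce])
    let ?y = "ancy p A R r"
    have ry: "R r ?y" "R' r ?y" "?y \<in> ?S" using E.ancy_M[OF True] E'.ancy_M[OF T'] yeq E.M_sub by auto
    have rep: "\<exists>u\<in>?S. R x u \<and> R' x u" if xS: "x \<in> ?S \<union> orbit p r" for x
    proof (cases "x \<in> ?S")
      case True thus ?thesis using E.Rrefl E'.Rrefl E.T_sub by blast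
    next
      case False
      then obtain t where t: "x = (p^^t) r" using xS E.orb_pow by blast
      have "R x ((p^^t) ?y)" "R' x ((p^^t) ?y)" using t ry E.Rpow E'.Rpow by auto
      moreover have "(p^^t) ?y \<in> ?S" using E.T_pow ry by blast
      ultimately show ?thesis by blast
    qed
    obtain u where u: "u \<in> ?S" "R a u" "R' a u" using rep a by blast
    obtain v where v: "v \<in> ?S" "R b v" "R' b v" using rep b by blast
    have "R a b = R u v" using u v E.Rsym E.Rtrans by metis
    moreover have "R' a b = R' u v" using u v E'.Rsym E'.Rtrans by metis
    ultimately show ?thesis using IH u v by blast
  next
    case False
    hence F': "\<not> anc p A R' r" using anceq by simp
    have pereq: "per p R r = per p R' r"
    proof -
      have "card (Mset p A R r) = card (Mset p A R' r)" using Meq by simp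
      thus ?thesis using E.code_ge[OF r False] E'.code_ge[OF r F'] ceq by linarith
    qed
    have orbS: "(p^^t) r \<notin> ?S \<or> True" for t by simp
    show ?thesis
    proof (cases "a \<in> ?S")
      case aS: True
      show ?thesis
      proof (cases "b \<in> ?S")
        case True thus ?thesis using IH aS by blast
      next
        case bF: False
        then obtain t where t: "b = (p^^t) r" using b E.orb_pow by blast
        thus ?thesis using E.noanc[OF False aS] E'.noanc[OF F' aS] E.Rsym E'.Rsym by blast
      qed
    next
      case aF: False
      then obtain t where t: "a = (p^^t) r" using a E.orb_pow by blast
      show ?thesis
      proof (cases "b \<in> ?S")
        case bS: True
        thus ?thesis using E.noanc[OF False bS] E'.noanc[OF F' bS] t by blast
      next
        case bF: False
        then obtain s where s: "b = (p^^s) r" using b E.orb_pow by blast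
        show ?thesis using E.rel_pows[OF r] E'.rel_pows[OF r] pereq t s by simp
      qed
    qed
  qed
qed

lemma code_inj:
  assumes E: "eqrel p A R" and E': "eqrel p A R'"
    and ceq: "\<forall>r\<in>A. Min (orbit p r) = r \<longrightarrow> code p A R r = code p A R' r"
  shows "R = R'"
proof -
  interpret E: eqrel p A R by (rule E)
  interpret E': eqrel p A R' by (rule E')
  have minin: "Min (orbit p z) \<in> orbit p z" for z
    by (rule Min_in[OF E.orb_fin orbit_nonempty])
  have main: "\<forall>a\<in>Tset p A x. \<forall>b\<in>Tset p A x. R a b = R' a b" for x
  proof (induction x)
    case 0 thus ?case by (simp add: Tset_def)
  next
    case (Suc x)
    show ?case
    proof (cases "\<exists>u\<in>A. Min (orbit p u) = x")
      case False
      hence "Tset p A (Suc x) = Tset p A x" by (auto simp: Tset_def less_Suc_eq)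
      thus ?thesis using Suc by simp
    next
      case True
      then obtain u where u: "u \<in> A" "Min (orbit p u) = x" by blast
      have xo: "x \<in> orbit p u" using minin[of u] u(2) by simp
      have xA: "x \<in> A" by (rule subsetD[OF E.orb_sub[OF u(1)] xo])
      have oeq: "orbit p x = orbit p u" by (rule E.orb_eq[OF xo])
      have mx: "Min (orbit p x) = x" using oeq u by simp
      have cx: "code p A R x = code p A R' x" using ceq xA mx by simp
      have sub: "y \<in> Tset p A x \<union> orbit p x" if y: "y \<in> Tset p A (Suc x)" for y
      proof (cases "y \<in> Tset p A x")
        case False
        hence my: "Min (orbit p y) = x" using y by (auto simp: Tset_def)
        hence "x \<in> orbit p y" using minin[of y] by simp
        hence "orbit p x = orbit p y" by (rule E.orb_eq)
        thus ?thesis using E.self_orb[of y] by simp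
      qed simp
      show ?thesis
      proof (intro ballI)
        fix a b assume a: "a \<in> Tset p A (Suc x)" and b: "b \<in> Tset p A (Suc x)"
        show "R a b = R' a b" by (rule code_step[OF E E' xA cx Suc.IH sub[OF a] sub[OF b]])
      qed
    qed
  qed
  show ?thesis
  proof (intro ext)
    fix a b
    show "R a b = R' a b"
    proof (cases "a \<in> A \<and> b \<in> A")
      case True
      have le: "Min (orbit p z) < Suc (Max A)" if "z \<in> A" for z
      proof -
        have "Min (orbit p z) \<in> A" by (rule subsetD[OF E.orb_sub[OF that] minin])
        hence "Min (orbit p z) \<le> Max A" by (rule Max_ge[OF E.fin])
        thus ?thesis by simp
      qed
      have "a \<in> Tset p A (Suc (Max A))" "b \<in> Tset p A (Suc (Max A))"
        using True le unfolding Tset_def by auto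
      thus ?thesis using main by blast
    next
      case False
      hence "\<not> R a b" "\<not> R' a b" using E.Rdom E'.Rdom by blast+
      thus ?thesis by simp
    qed
  qed
qed

lemma part_uniq:
  assumes "partition_on A P" "B \<in> P" "B' \<in> P" "x \<in> B" "x \<in> B'"
  shows "B = B'"
  using disjointD[OF partition_onD2[OF assms(1)] assms(2,3)] assms(4,5) by blast

lemma part_ex:
  assumes "partition_on A P" "x \<in> A" shows "\<exists>B\<in>P. x \<in> B"
  using partition_onD1[OF assms(1)] assms(2) by blast

lemma part_sub:
  assumes "partition_on A P" "B \<in> P" "x \<in> B" shows "x \<in> A"
  using partition_onD1[OF assms(1)] assms(2,3) by blast

lemma part_ne:
  assumes "partition_on A P" "B \<in> P" shows "\<exists>x. x \<in> B"
  using partition_onD3[OF assms(1)] assms(2) by (metis all_not_in_conv)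

lemma cls_eq:
  assumes "partition_on A P" "B \<in> P" "x \<in> B"
  shows "{w. relP P x w} = B"
proof
  show "{w. relP P x w} \<subseteq> B"
  proof
    fix w assume "w \<in> {w. relP P x w}"
    then obtain B' where "B' \<in> P" "x \<in> B'" "w \<in> B'" unfolding relP_def by blast
    thus "w \<in> B" using part_uniq[OF assms(1,2)] assms(3) by blast
  qed
  show "B \<subseteq> {w. relP P x w}" using assms(2,3) unfolding relP_def by blast
qed

lemma cls_img:
  assumes "partition_on A P"
  shows "(\<lambda>z. {w. relP P z w}) ` A = P"
proof
  show "(\<lambda>z. {w. relP P z w}) ` A \<subseteq> P"
  proof
    fix C assume "C \<in> (\<lambda>z. {w. relP P z w}) ` A"
    then obtain z where z: "z \<in> A" "C = {w. relP P z w}" by blast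
    then obtain B where "B \<in> P" "z \<in> B" using part_ex[OF assms] by blast
    thus "C \<in> P" using cls_eq[OF assms] z by simp
  qed
next
  show "P \<subseteq> (\<lambda>z. {w. relP P z w}) ` A"
  proof
    fix B assume B: "B \<in> P"
    then obtain x where x: "x \<in> B" using part_ne[OF assms] by blast
    hence "x \<in> A" using part_sub[OF assms B] by blast
    thus "B \<in> (\<lambda>z. {w. relP P z w}) ` A" using cls_eq[OF assms B x] by blast
  qed
qed

lemma part_rel:
  assumes P: "partition_on A P" and act: "act_partition p P = P"
    and perm: "p permutes A" and fin: "finite A"
  shows "eqrel p A (relP P)"
proof
  show "p permutes A" "finite A" by fact+
  show "relP P x y \<Longrightarrow> x \<in> A \<and> y \<in> A" for x y
    using part_sub[OF P] unfolding relP_def by blast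
  show "x \<in> A \<Longrightarrow> relP P x x" for x using part_ex[OF P] unfolding relP_def by blast
  show "relP P x y \<Longrightarrow> relP P y x" for x y unfolding relP_def by blast
  show "relP P x z" if h1: "relP P x y" and h2: "relP P y z" for x y z
  proof -
    obtain B where B: "B \<in> P" "x \<in> B" "y \<in> B" using h1 unfolding relP_def by blast
    obtain B' where B': "B' \<in> P" "y \<in> B'" "z \<in> B'" using h2 unfolding relP_def by blast
    have "B = B'" using part_uniq[OF P B(1) B'(1) B(3) B'(2)] .
    thus ?thesis using B B' unfolding relP_def by blast
  qed
  have img: "B \<in> P \<Longrightarrow> p ` B \<in> P" for B using act unfolding act_partition_def by blast
  have inj: "inj p" using perm permutes_inj by blast
  show "relP P (p x) (p y) = relP P x y" for x y
  proof
    assume "relP P (p x) (p y)"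
    then obtain B where B: "B \<in> P" "p x \<in> B" "p y \<in> B" unfolding relP_def by blast
    have "B \<in> (\<lambda>B. p ` B) ` P" using B(1) act unfolding act_partition_def by simp
    then obtain B' where B': "B' \<in> P" "B = p ` B'" by blast
    hence "x \<in> B'" "y \<in> B'" using B inj by (auto simp: inj_image_mem_iff)
    thus "relP P x y" using B' unfolding relP_def by blast
  next
    assume "relP P x y"
    then obtain B where B: "B \<in> P" "x \<in> B" "y \<in> B" unfolding relP_def by blast
    thus "relP P (p x) (p y)" using img unfolding relP_def by blast
  qed
qed

theorem lemma4p3:
  fixes n k c :: nat and p :: "nat \<Rightarrow> nat"
  assumes "n \<ge> 1" and "k dvd n"
    and "p permutes {1..n}"
    and "num_cycles p {1..n} = c"
  shows "card {P \<in> equipartitions n k. act_partition p P = P} \<le> k ^ c"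
proof -
  let ?A = "{1..n}"
  let ?F = "{P \<in> equipartitions n k. act_partition p P = P}"
  let ?Rs = "{x\<in>?A. Min (orbit p x) = x}"
  let ?g = "\<lambda>P. restrict (code p ?A (relP P)) ?Rs"
  have fin: "finite ?A" by simp
  have E: "eqrel p ?A (relP P)" if "P \<in> ?F" for P
    using part_rel[OF _ _ assms(3) fin] that unfolding equipartitions_def by blast
  have inj: "inj_on ?g ?F"
  proof (rule inj_onI)
    fix P Q assume P: "P \<in> ?F" and Q: "Q \<in> ?F" and e: "?g P = ?g Q"
    have "\<forall>r\<in>?A. Min (orbit p r) = r \<longrightarrow> code p ?A (relP P) r = code p ?A (relP Q) r"
    proof (intro ballI impI)
      fix r assume "r \<in> ?A" "Min (orbit p r) = r"
      hence "r \<in> ?Rs" by simp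
      thus "code p ?A (relP P) r = code p ?A (relP Q) r" using fun_cong[OF e, of r] by simp
    qed
    hence "relP P = relP Q" using code_inj[OF E[OF P] E[OF Q]] by blast
    moreover have "partition_on ?A P" "partition_on ?A Q" using P Q unfolding equipartitions_def by auto
    ultimately show "P = Q" using cls_img by metis
  qed
  have img: "?g ` ?F \<subseteq> PiE ?Rs (\<lambda>_. {..<k})"
  proof
    fix f assume "f \<in> ?g ` ?F"
    then obtain P where P: "P \<in> ?F" and f: "f = ?g P" by blast
    interpret eqrel p ?A "relP P" by (rule E[OF P])
    have "card ((\<lambda>z. {w. relP P z w}) ` ?A) = k"
      using cls_img P unfolding equipartitions_def by auto
    hence "code p ?A (relP P) r < k" if "r \<in> ?Rs" for r using code_bound that by auto
    thus "f \<in> PiE ?Rs (\<lambda>_. {..<k})" using f by auto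
  qed
  have "card ?F \<le> card (PiE ?Rs (\<lambda>_. {..<k}))"
    using inj img by (intro card_inj_on_le) (auto intro: finite_PiE)
  also have "\<dots> = k ^ card ?Rs" by (simp add: card_PiE)
  also have "card ?Rs = c"
  proof -
    have perm': "permutation p" by (rule permutes_imp_permutation[OF fin assms(3)])
    have self: "x \<in> orbit p x" for x by (rule permutation_self_in_orbit[OF perm'])
    have oe: "y \<in> orbit p x \<Longrightarrow> orbit p y = orbit p x" for x y
      by (meson orbit_swap orbit_trans self subsetI subset_antisym)
    have ofin: "finite (orbit p x)" for x by (rule finite_orbit[OF self])
    have "bij_betw (orbit p) ?Rs (orbit p ` ?A)"
    proof (rule bij_betw_imageI)
      show "inj_on (orbit p) ?Rs"
      proof (rule inj_onI)
        fix x y assume x: "x \<in> ?Rs" and y: "y \<in> ?Rs" and e: "orbit p x = orbit p y"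
        have "x = Min (orbit p x)" "y = Min (orbit p y)" using x y by auto
        thus "x = y" using e by simp
      qed
      show "orbit p ` ?Rs = orbit p ` ?A"
      proof
        show "orbit p ` ?A \<subseteq> orbit p ` ?Rs"
        proof
          fix Oc assume "Oc \<in> orbit p ` ?A"
          then obtain y where y: "y \<in> ?A" "Oc = orbit p y" by blast
          let ?x = "Min (orbit p y)"
          have xo: "?x \<in> orbit p y" by (rule Min_in[OF ofin orbit_nonempty])
          hence oxy: "orbit p ?x = orbit p y" by (rule oe)
          have "?x \<in> ?A" by (rule subsetD[OF permutes_orbit_subset[OF assms(3) y(1)] xo])
          hence "?x \<in> ?Rs" using oxy by simp
          thus "Oc \<in> orbit p ` ?Rs" using y(2) oxy by (intro rev_image_eqI[of ?x]) simp_all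
        qed
      qed auto
    qed
    hence "card ?Rs = card (orbit p ` ?A)" by (rule bij_betw_same_card)
    thus ?thesis using assms(4) unfolding num_cycles_def by simp
  qed
  finally show ?thesis .
qed

end
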